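(* Let $A$ be a synaptic algebra, $p,q\in P$, and put $r_p:=p\wedge(p^{\perp}\vee q)\wedge(p^{\perp}\vee q^{\perp})$ and $r_q:=q\wedge(p\vee q^{\perp})\wedge(p^{\perp}\vee q^{\perp})$. Then $pCq$ iff $r_p=r_q=0$ iff $r_pCr_q$.
   Context: Synaptic algebra (Foulis): $R$ is a real linear associative algebra with unit $1$, and $A\subseteq R$ is a real linear subspace with $1\in A$. For $a,b\in A$ write $aCb$ iff $ab=ba$; $C(a):=\{b\in A: aCb\}$; $CC(a):=\{b\in A: bCd \text{ for all } d\in C(a)\}$. $A$ is a synaptic algebra with enveloping algebra $R$ iff: (SA1) $A$ is a partially ordered archimedean real linear space with positive cone $A^+$, $1$ is an order unit, $\|\cdot\|$ the order-unit norm; (SA2) $a\in A\Rightarrow a^2\in A^+$; (SA3) $a,b\in A^+\Rightarrow aba\in A^+$; (SA4) if $a\in A$, $b\in A^+$, $aba=0$ then $ab=ba=0$; (SA5) if $a\in A^+$ there is $b\in A^+\cap CC(a)$ with $b^2=a$; (SA6) for $a\in A$ there is $p=p^2\in A$ with $ab=0\Leftrightarrow pb=0$ for all $b\in A$; (SA7) if $1\le a$ there is $b\in A$ with $ab=ba=1$; (SA8) if $a,b\in A$, $a_1\le a_2\le\cdots$ are pairwise commuting elements of $C(b)$ with $\|a-a_n\|\to0$, then $a\in C(b)$. $A$ is nondegenerate. $P:=\{p\in A:p=p^2\}$ with the order inherited from $A$ is an orthomodular lattice with orthocomplement $p^{\perp}:=1-p$, meet $\wedge$, join $\vee$. *)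

theory Defs
  imports Complex_Main
begin

text \<open>The enveloping algebra R is the type 'a (a real linear associative algebra with unit,
class real_algebra_1); A is a subset of R; Apos is the positive cone of A.\<close>

definition sa_le :: "'a::real_algebra_1 set \<Rightarrow> 'a \<Rightarrow> 'a \<Rightarrow> bool" where
  "sa_le Apos a b \<longleftrightarrow> b - a \<in> Apos"

definition comm_set :: "'a::real_algebra_1 set \<Rightarrow> 'a \<Rightarrow> 'a set" where
  "comm_set A a = {b \<in> A. a * b = b * a}"

definition bicomm_set :: "'a::real_algebra_1 set \<Rightarrow> 'a \<Rightarrow> 'a set" where
  "bicomm_set A a = {b \<in> A. \<forall>d \<in> comm_set A a. b * d = d * b}"

definition ou_norm :: "'a::real_algebra_1 set \<Rightarrow> 'a \<Rightarrow> real" where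
  "ou_norm Apos a = Inf {l::real. 0 < l \<and> sa_le Apos (- (l *\<^sub>R 1)) a \<and> sa_le Apos a (l *\<^sub>R 1)}"

definition synaptic_algebra :: "'a::real_algebra_1 set \<Rightarrow> 'a set \<Rightarrow> bool" where
  "synaptic_algebra A Apos \<longleftrightarrow>
    \<comment> \<open>A is a real linear subspace containing 1; nondegenerate\<close>
    0 \<in> A \<and> 1 \<in> A \<and> (0::'a) \<noteq> 1 \<and>
    (\<forall>a\<in>A. \<forall>b\<in>A. a + b \<in> A) \<and> (\<forall>c::real. \<forall>a\<in>A. c *\<^sub>R a \<in> A) \<and>
    \<comment> \<open>SA1: partially ordered (positive cone), archimedean, 1 an order unit\<close>
    Apos \<subseteq> A \<and>
    (\<forall>a\<in>Apos. \<forall>b\<in>Apos. a + b \<in> Apos) \<and>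
    (\<forall>c::real. \<forall>a\<in>Apos. 0 \<le> c \<longrightarrow> c *\<^sub>R a \<in> Apos) \<and>
    (\<forall>a\<in>Apos. - a \<in> Apos \<longrightarrow> a = 0) \<and>
    (\<forall>a\<in>A. \<forall>b\<in>A. (\<forall>n::nat. sa_le Apos (real n *\<^sub>R a) b) \<longrightarrow> sa_le Apos a 0) \<and>
    (\<forall>a\<in>A. \<exists>n::nat. sa_le Apos a (real n *\<^sub>R 1)) \<and>
    \<comment> \<open>SA2\<close>
    (\<forall>a\<in>A. a * a \<in> Apos) \<and>
    \<comment> \<open>SA3\<close>
    (\<forall>a\<in>Apos. \<forall>b\<in>Apos. a * b * a \<in> Apos) \<and>
    \<comment> \<open>SA4\<close>
    (\<forall>a\<in>A. \<forall>b\<in>Apos. a * b * a = 0 \<longrightarrow> a * b = 0 \<and> b * a = 0) \<and>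
    \<comment> \<open>SA5\<close>
    (\<forall>a\<in>Apos. \<exists>b\<in>Apos. b \<in> bicomm_set A a \<and> b * b = a) \<and>
    \<comment> \<open>SA6\<close>
    (\<forall>a\<in>A. \<exists>p\<in>A. p * p = p \<and> (\<forall>b\<in>A. a * b = 0 \<longleftrightarrow> p * b = 0)) \<and>
    \<comment> \<open>SA7\<close>
    (\<forall>a\<in>A. sa_le Apos 1 a \<longrightarrow> (\<exists>b\<in>A. a * b = 1 \<and> b * a = 1)) \<and>
    \<comment> \<open>SA8\<close>
    (\<forall>a\<in>A. \<forall>b\<in>A. \<forall>s::nat \<Rightarrow> 'a.
        (\<forall>n. s n \<in> comm_set A b) \<and> (\<forall>m n. s m * s n = s n * s m) \<and>
        (\<forall>n. sa_le Apos (s n) (s (Suc n))) \<and>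
        (\<lambda>n. ou_norm Apos (a - s n)) \<longlonglongrightarrow> 0
        \<longrightarrow> a \<in> comm_set A b)"

definition projections :: "'a::real_algebra_1 set \<Rightarrow> 'a set" where
  "projections A = {p \<in> A. p * p = p}"

definition proj_meet :: "'a::real_algebra_1 set \<Rightarrow> 'a set \<Rightarrow> 'a \<Rightarrow> 'a \<Rightarrow> 'a" where
  "proj_meet A Apos p q = (THE r. r \<in> projections A \<and> sa_le Apos r p \<and> sa_le Apos r q \<and>
      (\<forall>s\<in>projections A. sa_le Apos s p \<and> sa_le Apos s q \<longrightarrow> sa_le Apos s r))"

definition proj_join :: "'a::real_algebra_1 set \<Rightarrow> 'a set \<Rightarrow> 'a \<Rightarrow> 'a \<Rightarrow> 'a" where
  "proj_join A Apos p q = (THE r. r \<in> projections A \<and> sa_le Apos p r \<and> sa_le Apos q r \<and>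
      (\<forall>s\<in>projections A. sa_le Apos p s \<and> sa_le Apos q s \<longrightarrow> sa_le Apos r s))"

definition orthocomp :: "'a::real_algebra_1 \<Rightarrow> 'a" where
  "orthocomp p = 1 - p"

end

theory Submission
  imports Defs
begin

locale sa =
  fixes A Apos :: "'a::real_algebra_1 set"
  assumes SA: "synaptic_algebra A Apos"
begin

lemmas SAD = SA[unfolded synaptic_algebra_def]
lemma one_A: "1 \<in> A" using SAD[THEN conjunct2, THEN conjunct1] by blast
lemma add_A: "a \<in> A \<Longrightarrow> b \<in> A \<Longrightarrow> a + b \<in> A" using SAD[THEN conjunct2, THEN conjunct2, THEN conjunct2, THEN conjunct1] by blast
lemma scale_A: "a \<in> A \<Longrightarrow> c *\<^sub>R a \<in> A" using SAD[THEN conjunct2, THEN conjunct2, THEN conjunct2, THEN conjunct2, THEN conjunct1] by blast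
lemma neg_A: "a \<in> A \<Longrightarrow> - a \<in> A"
  using scale_A[of a "-1"] by simp
lemma diff_A: "a \<in> A \<Longrightarrow> b \<in> A \<Longrightarrow> a - b \<in> A"
  using add_A[of a "- b"] neg_A[of b] by simp
lemma pos_A: "a \<in> Apos \<Longrightarrow> a \<in> A" using SAD[THEN conjunct2, THEN conjunct2, THEN conjunct2, THEN conjunct2, THEN conjunct2, THEN conjunct1] by blast
lemma pos_antisym: "a \<in> Apos \<Longrightarrow> - a \<in> Apos \<Longrightarrow> a = 0" using SAD[THEN conjunct2, THEN conjunct2, THEN conjunct2, THEN conjunct2, THEN conjunct2, THEN conjunct2, THEN conjunct2, THEN conjunct2, THEN conjunct1] by blast
lemma sq_pos: "a \<in> A \<Longrightarrow> a * a \<in> Apos" using SAD[THEN conjunct2, THEN conjunct2, THEN conjunct2, THEN conjunct2, THEN conjunct2, THEN conjunct2, THEN conjunct2, THEN conjunct2, THEN conjunct2, THEN conjunct2, THEN conjunct2, THEN conjunct1] by blast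
lemma sa3: "a \<in> Apos \<Longrightarrow> b \<in> Apos \<Longrightarrow> a * b * a \<in> Apos" using SAD[THEN conjunct2, THEN conjunct2, THEN conjunct2, THEN conjunct2, THEN conjunct2, THEN conjunct2, THEN conjunct2, THEN conjunct2, THEN conjunct2, THEN conjunct2, THEN conjunct2, THEN conjunct2, THEN conjunct1] by blast
lemma sa4: "a \<in> A \<Longrightarrow> b \<in> Apos \<Longrightarrow> a * b * a = 0 \<Longrightarrow> a * b = 0 \<and> b * a = 0"
  using SAD[THEN conjunct2, THEN conjunct2, THEN conjunct2, THEN conjunct2, THEN conjunct2, THEN conjunct2, THEN conjunct2, THEN conjunct2, THEN conjunct2, THEN conjunct2, THEN conjunct2, THEN conjunct2, THEN conjunct2, THEN conjunct1] by blast
lemma sa6: "a \<in> A \<Longrightarrow> \<exists>p\<in>A. p * p = p \<and> (\<forall>b\<in>A. a * b = 0 \<longleftrightarrow> p * b = 0)"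
  using SAD[THEN conjunct2, THEN conjunct2, THEN conjunct2, THEN conjunct2, THEN conjunct2, THEN conjunct2, THEN conjunct2, THEN conjunct2, THEN conjunct2, THEN conjunct2, THEN conjunct2, THEN conjunct2, THEN conjunct2, THEN conjunct2, THEN conjunct2, THEN conjunct1] by blast

abbreviation "P \<equiv> projections A"
abbreviation le (infix "\<preceq>" 50) where "x \<preceq> y \<equiv> sa_le Apos x y"

lemma projA: "x \<in> P \<Longrightarrow> x \<in> A" by (simp add: projections_def)
lemma idem: "x \<in> P \<Longrightarrow> x * x = x" by (simp add: projections_def)
lemma proj_pos: "x \<in> P \<Longrightarrow> x \<in> Apos" using sq_pos[of x] by (simp add: projections_def)
lemma compl_P: "x \<in> P \<Longrightarrow> 1 - x \<in> P"
  using diff_A[OF one_A, of x] by (simp add: projections_def algebra_simps)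

lemma le_antisym: "x \<preceq> y \<Longrightarrow> y \<preceq> x \<Longrightarrow> x = y"
  unfolding sa_le_def using pos_antisym[of "y - x"] by simp

lemma le_compl: "(1 - y \<preceq> 1 - x) = (x \<preceq> y)"
  unfolding sa_le_def by (simp add: algebra_simps)

lemma le_mult:
  assumes x: "x \<in> P" and y: "y \<in> P" and le: "x \<preceq> y"
  shows "x * y = x \<and> y * x = x"
proof -
  have xx: "x * x = x" using idem x .
  have h1: "x * (y - x) * x \<in> Apos"
    using sa3[OF proj_pos[OF x]] le by (simp add: sa_le_def)
  have h2: "x * (1 - y) * x \<in> Apos"
    using sa3[OF proj_pos[OF x] proj_pos[OF compl_P[OF y]]] .
  have e1: "x * (y - x) * x = x * y * x - x * x * x"
    by (simp add: right_diff_distrib left_diff_distrib)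
  have e2: "x * (1 - y) * x = x * x - x * y * x"
    by (simp add: right_diff_distrib left_diff_distrib)
  have "x * (y - x) * x = - (x * (1 - y) * x)"
    unfolding e1 e2 by (simp add: xx)
  with h1 h2 have "x * (1 - y) * x = 0" using pos_antisym by auto
  then have "x * (1 - y) = 0 \<and> (1 - y) * x = 0"
    using sa4[OF projA[OF x] proj_pos[OF compl_P[OF y]]] by blast
  then show ?thesis by (simp add: algebra_simps)
qed

lemma mult_le:
  assumes x: "x \<in> P" and y: "y \<in> P" and e: "y * x = x"
  shows "x \<preceq> y"
proof -
  have xx: "x * x = x" using idem x .
  have yy: "y * y = y" using idem y .
  have "(1 - y) * x = 0" using e by (simp add: algebra_simps)
  then have "x * (1 - y) * x = 0" by (simp add: mult.assoc)
  then have "x * (1 - y) = 0"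
    using sa4[OF projA[OF x] proj_pos[OF compl_P[OF y]]] by blast
  then have xy: "x * y = x" by (simp add: algebra_simps)
  have "(y - x) * (y - x) = y - x" by (simp add: algebra_simps xx yy xy e)
  moreover have "(y - x) * (y - x) \<in> Apos" using sq_pos diff_A projA x y by blast
  ultimately show ?thesis by (simp add: sa_le_def)
qed

lemma mult_le':
  assumes x: "x \<in> P" and y: "y \<in> P" and e: "x * y = x"
  shows "x \<preceq> y"
proof -
  have "x * (1 - y) = 0" using e by (simp add: algebra_simps)
  then have "x * (1 - y) * x = 0" by simp
  then have "(1 - y) * x = 0"
    using sa4[OF projA[OF x] proj_pos[OF compl_P[OF y]]] by blast
  then have "y * x = x" by (simp add: algebra_simps)
  then show ?thesis using mult_le x y by blast
qed

definition "is_meet x y r \<longleftrightarrow> r \<in> P \<and> r \<preceq> x \<and> r \<preceq> y \<and> (\<forall>s\<in>P. s \<preceq> x \<and> s \<preceq> y \<longrightarrow> s \<preceq> r)"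
definition "is_join x y r \<longleftrightarrow> r \<in> P \<and> x \<preceq> r \<and> y \<preceq> r \<and> (\<forall>s\<in>P. x \<preceq> s \<and> y \<preceq> s \<longrightarrow> r \<preceq> s)"

lemma join_ex:
  assumes x: "x \<in> P" and y: "y \<in> P"
  shows "\<exists>c. is_join x y c"
proof -
  obtain c where cA: "c \<in> A" and cc: "c * c = c" and cb: "\<forall>b\<in>A. (x + y) * b = 0 \<longleftrightarrow> c * b = 0"
    using sa6[OF add_A[OF projA[OF x] projA[OF y]]] by blast
  have cP: "c \<in> P" using cA cc by (simp add: projections_def)
  have "c * (1 - c) = 0" using cc by (simp add: algebra_simps)
  then have "(x + y) * (1 - c) = 0" using cb compl_P[OF cP] projA by blast
  moreover have "(1 - c) * x * (1 - c) + (1 - c) * y * (1 - c) = (1 - c) * ((x + y) * (1 - c))"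
    by (simp add: algebra_simps)
  ultimately have "(1 - c) * x * (1 - c) + (1 - c) * y * (1 - c) = 0" by simp
  moreover have p1: "(1 - c) * x * (1 - c) \<in> Apos" using sa3 proj_pos compl_P cP x by blast
  moreover have p2: "(1 - c) * y * (1 - c) \<in> Apos" using sa3 proj_pos compl_P cP y by blast
  ultimately have sum0: "(1 - c) * x * (1 - c) + (1 - c) * y * (1 - c) = 0" by simp
  then have yx: "(1 - c) * y * (1 - c) = - ((1 - c) * x * (1 - c))" by (simp add: add_eq_0_iff)
  have "- ((1 - c) * x * (1 - c)) \<in> Apos" using p2 yx by simp
  then have z1: "(1 - c) * x * (1 - c) = 0" using pos_antisym[OF p1] by simp
  then have z2: "(1 - c) * y * (1 - c) = 0" using yx by simp
  have "(1 - c) * x = 0" using sa4[OF projA[OF compl_P[OF cP]] proj_pos[OF x] z1] by blast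
  then have "c * x = x" by (simp add: algebra_simps)
  then have lx: "x \<preceq> c" using mult_le x cP by blast
  have "(1 - c) * y = 0" using sa4[OF projA[OF compl_P[OF cP]] proj_pos[OF y] z2] by blast
  then have "c * y = y" by (simp add: algebra_simps)
  then have ly: "y \<preceq> c" using mult_le y cP by blast
  have lub: "\<forall>s\<in>P. x \<preceq> s \<and> y \<preceq> s \<longrightarrow> c \<preceq> s"
  proof (intro ballI impI)
    fix s assume s: "s \<in> P" and h: "x \<preceq> s \<and> y \<preceq> s"
    have "x * s = x" "y * s = y" using le_mult x y s h by blast+
    then have "(x + y) * (1 - s) = 0" by (simp add: algebra_simps)
    then have "c * (1 - s) = 0" using cb compl_P[OF s] projA by blast
    then have "c * s = c" by (metis right_diff_distrib mult.right_neutral eq_iff_diff_eq_0)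
    then show "c \<preceq> s" using mult_le' cP s by blast
  qed
  show ?thesis using cP lx ly lub unfolding is_join_def by blast
qed

lemma meet_ex:
  assumes x: "x \<in> P" and y: "y \<in> P"
  shows "\<exists>m. is_meet x y m"
proof -
  obtain c where c: "is_join (1 - x) (1 - y) c" using join_ex compl_P x y by blast
  have "is_meet x y (1 - c)"
    unfolding is_meet_def
  proof (intro conjI ballI impI)
    show "1 - c \<in> P" using c compl_P by (simp add: is_join_def)
    show "1 - c \<preceq> x" using c le_compl[of x "1 - c"] by (simp add: is_join_def)
    show "1 - c \<preceq> y" using c le_compl[of y "1 - c"] by (simp add: is_join_def)
    fix s assume s: "s \<in> P" and h: "s \<preceq> x \<and> s \<preceq> y"
    have "1 - x \<preceq> 1 - s" "1 - y \<preceq> 1 - s" using h le_compl by blast+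
    then have "c \<preceq> 1 - s" using c compl_P[OF s] by (simp add: is_join_def)
    then show "s \<preceq> 1 - c" using le_compl[of "1 - c" s] by simp
  qed
  then show ?thesis by blast
qed

lemma meet_unique: "is_meet x y r \<Longrightarrow> is_meet x y r' \<Longrightarrow> r = r'"
  unfolding is_meet_def using le_antisym by blast
lemma join_unique: "is_join x y r \<Longrightarrow> is_join x y r' \<Longrightarrow> r = r'"
  unfolding is_join_def using le_antisym by blast

lemma meet_eqI: "is_meet x y r \<Longrightarrow> proj_meet A Apos x y = r"
  unfolding proj_meet_def
  apply (rule the_equality)
   apply (simp add: is_meet_def)
  using meet_unique unfolding is_meet_def by blast

lemma join_eqI: "is_join x y r \<Longrightarrow> proj_join A Apos x y = r"
  unfolding proj_join_def
  apply (rule the_equality)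
   apply (simp add: is_join_def)
  using join_unique unfolding is_join_def by blast

lemma meet_is: "x \<in> P \<Longrightarrow> y \<in> P \<Longrightarrow> is_meet x y (proj_meet A Apos x y)"
proof -
  assume "x \<in> P" "y \<in> P"
  then obtain m where "is_meet x y m" using meet_ex by blast
  then show ?thesis using meet_eqI by simp
qed

lemma join_compl:
  assumes x: "x \<in> P" and y: "y \<in> P"
  shows "proj_join A Apos (1 - x) (1 - y) = 1 - proj_meet A Apos x y"
proof -
  define m where "m = proj_meet A Apos x y"
  have m: "is_meet x y m" using meet_is x y m_def by blast
  have "is_join (1 - x) (1 - y) (1 - m)"
    unfolding is_join_def
  proof (intro conjI ballI impI)
    show "1 - m \<in> P" using m compl_P by (simp add: is_meet_def)
    show "1 - x \<preceq> 1 - m" using m le_compl by (simp add: is_meet_def)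
    show "1 - y \<preceq> 1 - m" using m le_compl by (simp add: is_meet_def)
    fix s assume s: "s \<in> P" and h: "1 - x \<preceq> s \<and> 1 - y \<preceq> s"
    have "1 - s \<preceq> x" "1 - s \<preceq> y" using h le_compl[of x "1 - s"] le_compl[of y "1 - s"] by simp_all
    then have "1 - s \<preceq> m" using m compl_P[OF s] by (simp add: is_meet_def)
    then show "1 - m \<preceq> s" using le_compl[of m "1 - s"] by simp
  qed
  then show ?thesis using join_eqI m_def by blast
qed

lemma comm_A:
  assumes x: "x \<in> P" and y: "y \<in> P" and c: "x * y = y * x"
  shows "x * y \<in> A"
proof -
  have s: "(x + y) * (x + y) \<in> A" using sq_pos pos_A add_A projA x y by blast
  have "(x + y) * (x + y) - x - y = x * y + x * y"
    using idem[OF x] idem[OF y] c by (simp add: algebra_simps)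
  then have "x * y + x * y \<in> A" using s diff_A projA x y by metis
  then have "(1/2::real) *\<^sub>R (x * y + x * y) \<in> A" using scale_A by blast
  moreover have "(1/2::real) *\<^sub>R (x * y + x * y) = x * y"
  proof -
    have "(1/2::real) *\<^sub>R (x * y + x * y) = ((1/2::real) + 1/2) *\<^sub>R (x * y)"
      by (simp only: scaleR_add_right scaleR_add_left)
    then show ?thesis by simp
  qed
  ultimately show ?thesis by simp
qed

lemma meet_comm:
  assumes x: "x \<in> P" and y: "y \<in> P" and c: "x * y = y * x"
  shows "proj_meet A Apos x y = x * y"
proof (rule meet_eqI)
  have xx: "x * x = x" using idem x .
  have yy: "y * y = y" using idem y .
  have xyP: "x * y \<in> P"
  proof -
    have "x * y * (x * y) = x * (y * x) * y" by (simp add: mult.assoc)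
    also have "\<dots> = x * (x * y) * y" by (simp add: c)
    also have "\<dots> = (x * x) * (y * y)" by (simp add: mult.assoc)
    also have "\<dots> = x * y" by (simp add: xx yy)
    finally show ?thesis using comm_A[OF x y c] by (simp add: projections_def)
  qed
  show "is_meet x y (x * y)"
    unfolding is_meet_def
  proof (intro conjI ballI impI)
    show "x * y \<in> P" by fact
    show "x * y \<preceq> x" using mult_le[OF xyP x] xx by (simp add: mult.assoc[symmetric])
    show "x * y \<preceq> y" using mult_le'[OF xyP y] yy by (simp add: mult.assoc)
    fix s assume s: "s \<in> P" and h: "s \<preceq> x \<and> s \<preceq> y"
    have "s * x = s" "s * y = s" using le_mult s x y h by blast+
    then have "s * (x * y) = s" by (simp add: mult.assoc[symmetric])
    then show "s \<preceq> x * y" using mult_le'[OF s xyP] by simp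
  qed
qed

lemma main:
  assumes p: "p \<in> P" and q: "q \<in> P"
  defines "rp \<equiv> proj_meet A Apos (proj_meet A Apos p (proj_join A Apos (1 - p) q))
                   (proj_join A Apos (1 - p) (1 - q))"
    and "rq \<equiv> proj_meet A Apos (proj_meet A Apos q (proj_join A Apos p (1 - q)))
                   (proj_join A Apos (1 - p) (1 - q))"
  shows "(p * q = q * p \<longleftrightarrow> rp = 0 \<and> rq = 0) \<and> (rp = 0 \<and> rq = 0 \<longleftrightarrow> rp * rq = rq * rp)"
proof -
  have nq: "1 - q \<in> P" using compl_P q .
  have np: "1 - p \<in> P" using compl_P p .
  have pp: "p * p = p" using idem p .
  have qq: "q * q = q" using idem q .
  define a where "a = proj_meet A Apos p q"
  define b where "b = proj_meet A Apos p (1 - q)"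
  define c where "c = proj_meet A Apos (1 - p) q"
  have am: "is_meet p q a" using meet_is p q a_def by blast
  have bm: "is_meet p (1 - q) b" using meet_is p nq b_def by blast
  have cm: "is_meet (1 - p) q c" using meet_is np q c_def by blast
  have aP: "a \<in> P" and bP: "b \<in> P" and cP: "c \<in> P"
    using am bm cm by (auto simp: is_meet_def)
  have aa: "a * a = a" and bb: "b * b = b" and cc: "c * c = c" using idem aP bP cP by auto
  have "a * p = a \<and> p * a = a" using le_mult aP p am by (auto simp: is_meet_def)
  then have ap: "a * p = a" and pa: "p * a = a" by auto
  have "a * q = a \<and> q * a = a" using le_mult aP q am by (auto simp: is_meet_def)
  then have aq: "a * q = a" and qa: "q * a = a" by auto
  have "b * p = b \<and> p * b = b" using le_mult bP p bm by (auto simp: is_meet_def)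
  then have bp: "b * p = b" and pb: "p * b = b" by auto
  have "b * (1 - q) = b \<and> (1 - q) * b = b" using le_mult bP nq bm by (auto simp: is_meet_def)
  then have bq: "b * q = 0" and qb: "q * b = 0" by (auto simp: algebra_simps)
  have "c * (1 - p) = c \<and> (1 - p) * c = c" using le_mult cP np cm by (auto simp: is_meet_def)
  then have cp: "c * p = 0" and pc: "p * c = 0" by (auto simp: algebra_simps)
  have "c * q = c \<and> q * c = c" using le_mult cP q cm by (auto simp: is_meet_def)
  then have cq: "c * q = c" and qc: "q * c = c" by auto
  have ab: "a * b = 0"
  proof -
    have "a * b = a * q * b" by (simp add: aq)
    also have "\<dots> = a * (q * b)" by (simp only: mult.assoc)
    also have "\<dots> = 0" by (simp add: qb)
    finally show ?thesis .
  qed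
  have ba: "b * a = 0"
  proof -
    have "b * a = b * (q * a)" by (simp add: qa)
    also have "\<dots> = b * q * a" by (simp only: mult.assoc)
    also have "\<dots> = 0" by (simp add: bq)
    finally show ?thesis .
  qed
  have ac: "a * c = 0"
  proof -
    have "a * c = a * p * c" by (simp add: ap)
    also have "\<dots> = a * (p * c)" by (simp only: mult.assoc)
    also have "\<dots> = 0" by (simp add: pc)
    finally show ?thesis .
  qed
  have ca: "c * a = 0"
  proof -
    have "c * a = c * (p * a)" by (simp add: pa)
    also have "\<dots> = c * p * a" by (simp only: mult.assoc)
    also have "\<dots> = 0" by (simp add: cp)
    finally show ?thesis .
  qed
  have bc: "b * c = 0"
  proof -
    have "b * c = b * p * c" by (simp add: bp)
    also have "\<dots> = b * (p * c)" by (simp only: mult.assoc)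
    also have "\<dots> = 0" by (simp add: pc)
    finally show ?thesis .
  qed
  have cb: "c * b = 0"
  proof -
    have "c * b = c * q * b" by (simp add: cq)
    also have "\<dots> = c * (q * b)" by (simp only: mult.assoc)
    also have "\<dots> = 0" by (simp add: qb)
    finally show ?thesis .
  qed
  have dd: "\<And>z::'a. 1 - (1 - z) = z" by simp
  have J1: "proj_join A Apos (1 - p) q = 1 - b"
    using join_compl[OF p nq] unfolding b_def unfolding dd .
  have J2: "proj_join A Apos (1 - p) (1 - q) = 1 - a"
    using join_compl[OF p q] unfolding a_def .
  have J3: "proj_join A Apos p (1 - q) = 1 - c"
    using join_compl[OF np q] unfolding c_def unfolding dd .
  have nb: "1 - b \<in> P" using compl_P bP .
  have na: "1 - a \<in> P" using compl_P aP .
  have nc: "1 - c \<in> P" using compl_P cP .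
  have M1: "proj_meet A Apos p (1 - b) = p - b"
    using meet_comm[OF p nb] by (simp add: algebra_simps pb bp)
  have pbP: "p - b \<in> P" using meet_is[OF p nb] M1 by (simp add: is_meet_def)
  have M2: "proj_meet A Apos (p - b) (1 - a) = p - a - b"
    using meet_comm[OF pbP na] by (simp add: algebra_simps pa ap ab ba)
  have rpe: "rp = p - a - b" unfolding rp_def J1 J2 M1 M2 ..
  have N1: "proj_meet A Apos q (1 - c) = q - c"
    using meet_comm[OF q nc] by (simp add: algebra_simps qc cq)
  have qcP: "q - c \<in> P" using meet_is[OF q nc] N1 by (simp add: is_meet_def)
  have N2: "proj_meet A Apos (q - c) (1 - a) = q - a - c"
    using meet_comm[OF qcP na] by (simp add: algebra_simps qa aq ac ca)
  have rqe: "rq = q - a - c" unfolding rq_def J3 J2 N1 N2 ..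
  have rpP: "rp \<in> P" unfolding rp_def J1 J2 M1
    using meet_is[OF pbP na] by (simp add: is_meet_def)
  have rqP: "rq \<in> P" unfolding rq_def J3 J2 N1
    using meet_is[OF qcP na] by (simp add: is_meet_def)
  have I1: "p * q = q * p \<Longrightarrow> rp = 0 \<and> rq = 0"
  proof -
    assume pq: "p * q = q * p"
    have "a = p * q" using meet_comm[OF p q pq] a_def by simp
    moreover have "b = p - p * q"
      using meet_comm[OF p nq] pq b_def by (simp add: algebra_simps)
    moreover have "c = q - p * q"
      using meet_comm[OF np q] pq c_def by (simp add: algebra_simps)
    ultimately show ?thesis using rpe rqe by simp
  qed
  have I2: "rp = 0 \<Longrightarrow> p * q = q * p"
  proof -
    assume "rp = 0"
    then have pe: "p = a + b" using rpe by (simp add: algebra_simps)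
    have "p * q = a" unfolding pe by (simp add: algebra_simps aq bq)
    moreover have "q * p = a" unfolding pe by (simp add: algebra_simps qa qb)
    ultimately show ?thesis by simp
  qed
  have I3: "rp * rq = rq * rp \<Longrightarrow> rp = 0 \<and> rq = 0"
  proof -
    define e where "e = rp"
    define f where "f = rq"
    assume "rp * rq = rq * rp"
    then have ef: "e * f = f * e" using e_def f_def by simp
    have eP: "e \<in> P" using rpP e_def by simp
    have fP: "f \<in> P" using rqP f_def by simp
    have ee: "e = p - a - b" using rpe e_def by simp
    have fe: "f = q - a - c" using rqe f_def by simp
    have pe: "p * e = e" unfolding ee by (simp add: algebra_simps pp pa pb)
    have fq: "f * q = f" unfolding fe by (simp add: algebra_simps qq aq cq)
    have ea: "e * a = 0" unfolding ee by (simp add: algebra_simps pa aa ba)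
    have ec: "e * c = 0" unfolding ee by (simp add: algebra_simps pc ac bc)
    have eb: "e * b = 0" unfolding ee by (simp add: algebra_simps pb ab bb)
    have fa: "f * a = 0" unfolding fe by (simp add: algebra_simps qa aa ca)
    have fb: "f * b = 0" unfolding fe by (simp add: algebra_simps qb ab cb)
    have fc: "f * c = 0" unfolding fe by (simp add: algebra_simps qc ac cc)
    have efP: "e * f \<in> P" using meet_is[OF eP fP] meet_comm[OF eP fP ef] by (simp add: is_meet_def)
    have "p * (e * f) = e * f" using pe by (simp add: mult.assoc[symmetric])
    then have l1: "e * f \<preceq> p" using mult_le[OF efP p] by simp
    have "(e * f) * q = e * f" using fq by (simp add: mult.assoc)
    then have l2: "e * f \<preceq> q" using mult_le'[OF efP q] by simp
    have "e * f \<preceq> a" using am l1 l2 efP by (simp add: is_meet_def)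
    then have "(e * f) * a = e * f" using le_mult[OF efP aP] by simp
    moreover have "(e * f) * a = 0" unfolding ef by (simp add: mult.assoc ea)
    ultimately have ef0: "e * f = 0" by simp
    have "e * q = e * f + e * a + e * c" unfolding fe by (simp add: algebra_simps)
    then have eq0: "e * q = 0" using ef0 ea ec by simp
    have "e * (1 - q) = e" using eq0 by (simp add: algebra_simps)
    then have l3: "e \<preceq> 1 - q" using mult_le'[OF eP nq] by simp
    have l4: "e \<preceq> p" using mult_le[OF eP p pe] .
    have "e \<preceq> b" using bm l3 l4 eP by (simp add: is_meet_def)
    then have "e * b = e" using le_mult[OF eP bP] by simp
    then have e0: "e = 0" using eb by simp
    have "f * p = f * e + f * a + f * b" unfolding ee by (simp add: algebra_simps)
    then have fp0: "f * p = 0" using ef0 ef fa fb by simp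
    have "f * (1 - p) = f" using fp0 by (simp add: algebra_simps)
    then have l5: "f \<preceq> 1 - p" using mult_le'[OF fP np] by simp
    have l6: "f \<preceq> q" using mult_le'[OF fP q fq] .
    have "f \<preceq> c" using cm l5 l6 fP by (simp add: is_meet_def)
    then have "f * c = f" using le_mult[OF fP cP] by simp
    then have f0: "f = 0" using fc by simp
    show ?thesis using e0 f0 unfolding e_def f_def by (rule conjI)
  qed
  have I4: "rp = 0 \<and> rq = 0 \<Longrightarrow> rp * rq = rq * rp" by simp
  have G1: "p * q = q * p \<longleftrightarrow> rp = 0 \<and> rq = 0"
    using I1 I2 by blast
  have G2: "rp = 0 \<and> rq = 0 \<longleftrightarrow> rp * rq = rq * rp"
    using I3 I4 by blast
  show ?thesis using G1 G2 by (rule conjI)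
qed

end

theorem corollary3p5:
  fixes A Apos :: "'a::real_algebra_1 set" and p q :: 'a
  assumes "synaptic_algebra A Apos"
    and "p \<in> projections A" and "q \<in> projections A"
  defines "rp \<equiv> proj_meet A Apos (proj_meet A Apos p (proj_join A Apos (orthocomp p) q))
                   (proj_join A Apos (orthocomp p) (orthocomp q))"
    and "rq \<equiv> proj_meet A Apos (proj_meet A Apos q (proj_join A Apos p (orthocomp q)))
                   (proj_join A Apos (orthocomp p) (orthocomp q))"
  shows "(p * q = q * p \<longleftrightarrow> rp = 0 \<and> rq = 0) \<and> (rp = 0 \<and> rq = 0 \<longleftrightarrow> rp * rq = rq * rp)"
proof -
  interpret sa A Apos by (rule sa.intro) (rule assms(1))
  show ?thesis unfolding rp_def rq_def orthocomp_def by (rule main[OF assms(2,3)])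
qed

end
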